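(* Let $Z,Z'\subseteq A^+$. If $Z$ and $Z'$ are both prefix alt-induced codes (respectively both suffix alt-induced codes, both bifix alt-induced codes), then $ZZ'$ is a prefix (respectively suffix, bifix) alt-induced code.
   Context: $A$ is a finite alphabet, $A^+$ the set of non-empty words, $ZZ'=\{zz':z\in Z,z'\in Z'\}$. A code is a subset of $A^+$ in which every word has at most one factorization into its elements. A prefix (suffix) code is a subset of $A^+$ in which no word is a proper prefix (suffix) of another; a bifix code is both. For non-empty $X,Y\subseteq A^+$, $(X,Y)$ is an alternative code if no word of $A^+$ admits two different similar alternative factorizations on $(X,Y)$ (factorizations $u_1\cdots u_n$, $n\ge2$, $u_i\in X\cup Y$, alternating between $X$ and $Y$; similar = beginning in the same set and ending in the same set); equivalently, $XY$ is a code and the product $XY$ is unambiguous. An alt-induced code is a set $XY$ with $(X,Y)$ an alternative code; a prefix (suffix, bifix) alt-induced code is an alt-induced code that is also a prefix (suffix, bifix) code. *)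

theory Defs
  imports Main "HOL-Library.Sublist"
begin

definition Aplus :: "'a set \<Rightarrow> 'a list set" where
  "Aplus A = {w. w \<in> lists A \<and> w \<noteq> []}"

definition conc :: "'a list set \<Rightarrow> 'a list set \<Rightarrow> 'a list set" where
  "conc X Y = {x @ y | x y. x \<in> X \<and> y \<in> Y}"

definition is_code :: "'a set \<Rightarrow> 'a list set \<Rightarrow> bool" where
  "is_code A X \<longleftrightarrow> X \<subseteq> Aplus A \<and>
     (\<forall>us vs. set us \<subseteq> X \<longrightarrow> set vs \<subseteq> X \<longrightarrow> concat us = concat vs \<longrightarrow> us = vs)"

definition prefix_code :: "'a set \<Rightarrow> 'a list set \<Rightarrow> bool" where
  "prefix_code A X \<longleftrightarrow> X \<subseteq> Aplus A \<and> (\<forall>x\<in>X. \<forall>y\<in>X. \<not> strict_prefix x y)"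

definition suffix_code :: "'a set \<Rightarrow> 'a list set \<Rightarrow> bool" where
  "suffix_code A X \<longleftrightarrow> X \<subseteq> Aplus A \<and> (\<forall>x\<in>X. \<forall>y\<in>X. \<not> strict_suffix x y)"

definition bifix_code :: "'a set \<Rightarrow> 'a list set \<Rightarrow> bool" where
  "bifix_code A X \<longleftrightarrow> prefix_code A X \<and> suffix_code A X"

text \<open>The sets of all factors are
  determined by the starting set b and the position; the ending set by b and the parity of n.\<close>
definition alt_fact :: "'a list set \<Rightarrow> 'a list set \<Rightarrow> bool \<Rightarrow> 'a list list \<Rightarrow> bool" where
  "alt_fact X Y b us \<longleftrightarrow> length us \<ge> 2 \<and>
     (\<forall>i < length us. us ! i \<in> (if even i = b then X else Y))"

definition alternative_code :: "'a set \<Rightarrow> 'a list set \<Rightarrow> 'a list set \<Rightarrow> bool" where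
  "alternative_code A X Y \<longleftrightarrow> X \<subseteq> Aplus A \<and> Y \<subseteq> Aplus A \<and> X \<noteq> {} \<and> Y \<noteq> {} \<and>
     (\<forall>b us vs. alt_fact X Y b us \<longrightarrow> alt_fact X Y b vs \<longrightarrow>
        even (length us) = even (length vs) \<longrightarrow> concat us = concat vs \<longrightarrow> us = vs)"

definition alt_induced_code :: "'a set \<Rightarrow> 'a list set \<Rightarrow> bool" where
  "alt_induced_code A Z \<longleftrightarrow> (\<exists>X Y. alternative_code A X Y \<and> Z = conc X Y)"

definition prefix_alt_induced_code :: "'a set \<Rightarrow> 'a list set \<Rightarrow> bool" where
  "prefix_alt_induced_code A Z \<longleftrightarrow> alt_induced_code A Z \<and> prefix_code A Z"

definition suffix_alt_induced_code :: "'a set \<Rightarrow> 'a list set \<Rightarrow> bool" where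
  "suffix_alt_induced_code A Z \<longleftrightarrow> alt_induced_code A Z \<and> suffix_code A Z"

definition bifix_alt_induced_code :: "'a set \<Rightarrow> 'a list set \<Rightarrow> bool" where
  "bifix_alt_induced_code A Z \<longleftrightarrow> alt_induced_code A Z \<and> bifix_code A Z"

end

theory Submission
  imports Defs
begin

lemma pc_eq:
  assumes "x @ y = x' @ y'" "x \<in> P" "x' \<in> P" "\<forall>a\<in>P. \<forall>b\<in>P. \<not> strict_prefix a b"
  shows "x = x' \<and> y = y'"
proof -
  have "prefix x (x@y)" "prefix x' (x@y)" using assms(1) by (metis prefixI)+
  then have "prefix x x' \<or> prefix x' x" using prefix_same_cases by blast
  then have "x = x'" using assms(2,3,4) by (auto simp: strict_prefix_def)
  then show ?thesis using assms(1) by simp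
qed

lemma sc_eq:
  assumes "y @ x = y' @ x'" "x \<in> P" "x' \<in> P" "\<forall>a\<in>P. \<forall>b\<in>P. \<not> strict_suffix a b"
  shows "x = x' \<and> y = y'"
proof -
  have "suffix x (y@x)" "suffix x' (y@x)" using assms(1) by (metis suffixI)+
  then have "suffix x x' \<or> suffix x' x" using suffix_same_cases by blast
  then have "x = x'" using assms(2,3,4) by (auto simp: strict_suffix_def)
  then show ?thesis using assms(1) by simp
qed

lemma concat_nil_imp:
  assumes "concat vs = []" "\<forall>i<length vs. vs!i \<in> S i" "\<forall>i. [] \<notin> S i"
  shows "vs = []"
proof (cases vs)
  case (Cons v vs')
  then have "v \<in> S 0" using assms(2) by force
  moreover have "v = []" using assms(1) Cons by simp
  ultimately show ?thesis using assms(3) by blast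
qed simp

lemma pre_uniq:
  assumes "\<forall>i. \<forall>a\<in>S i. \<forall>b\<in>S i. \<not> strict_prefix a b" "\<forall>i. [] \<notin> S i"
    "\<forall>i<length us. us!i \<in> S i" "\<forall>i<length vs. vs!i \<in> S i" "concat us = concat vs"
  shows "us = vs"
  using assms
proof (induction us arbitrary: vs S)
  case Nil
  then show ?case using concat_nil_imp[of vs S] by simp
next
  case (Cons u us)
  have "vs \<noteq> []"
  proof
    assume "vs = []"
    then have "concat (u#us) = []" using Cons.prems(5) by simp
    then show False using concat_nil_imp[of "u#us" S] Cons.prems(2,3) by blast
  qed
  then obtain v vs' where vs: "vs = v # vs'" by (cases vs) auto
  have u: "u \<in> S 0" using Cons.prems(3) by force
  have v: "v \<in> S 0" using Cons.prems(4) vs by force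
  have "u = v \<and> concat us = concat vs'"
    using pc_eq[of u "concat us" v "concat vs'" "S 0"] u v Cons.prems(1,5) vs by simp
  moreover have "us = vs'"
    apply (rule Cons.IH[of "\<lambda>i. S (Suc i)"])
    using Cons.prems vs calculation by auto
  ultimately show ?case using vs by simp
qed

lemma per2:
  assumes "\<forall>i. S (Suc (Suc i)) = S i"
  shows "even i = even j \<Longrightarrow> S i = S j"
proof -
  have a: "S i = S (i mod 2)" for i
  proof (induction i rule: less_induct)
    case (less i)
    show ?case
    proof (cases "i < 2")
      case True then show ?thesis by simp
    next
      case False
      then obtain k where k: "i = Suc (Suc k)" by (metis add_2_eq_Suc le_add_diff_inverse not_less)
      then have "S i = S k" using assms by simp
      also have "\<dots> = S (k mod 2)" using less.IH[of k] k by linarith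
      also have "k mod 2 = i mod 2" using k by simp
      finally show ?thesis .
    qed
  qed
  assume "even i = even j"
  then have "i mod 2 = j mod 2" by (metis even_iff_mod_2_eq_zero odd_iff_mod_2_eq_one)
  then show "S i = S j" using a by metis
qed

lemma suf_uniq:
  assumes "\<forall>i. \<forall>a\<in>S i. \<forall>b\<in>S i. \<not> strict_suffix a b" "\<forall>i. [] \<notin> S i"
    "\<forall>i. S (Suc (Suc i)) = S i"
    "\<forall>i<length us. us!i \<in> S i" "\<forall>i<length vs. vs!i \<in> S i" "concat us = concat vs"
    "even (length us) = even (length vs)"
  shows "us = vs"
  using assms
proof (induction us arbitrary: vs rule: rev_induct)
  case Nil
  then show ?case using concat_nil_imp[of vs S] by simp
next
  case (snoc u us)
  have "vs \<noteq> []"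
  proof
    assume "vs = []"
    then have "concat (us@[u]) = []" using snoc.prems(6) by simp
    then show False using concat_nil_imp[of "us@[u]" S] snoc.prems(2,4) by blast
  qed
  then obtain v vs' where vs: "vs = vs' @ [v]" by (cases vs rule: rev_cases) auto
  have per: "\<And>i j. even i = even j \<Longrightarrow> S i = S j" using per2[OF assms(3)] by blast
  have u: "u \<in> S (length us)" using snoc.prems(4) by (auto simp: nth_append)
  have v: "v \<in> S (length vs')" using snoc.prems(5) vs by (auto simp: nth_append)
  have "even (length us) = even (length vs')" using snoc.prems(7) vs by simp
  then have v': "v \<in> S (length us)" using per v by metis
  have "u = v \<and> concat us = concat vs'"
    using sc_eq[of "concat us" u "concat vs'" v "S (length us)"] u v' snoc.prems(1,6) vs by simp
  moreover have "\<forall>i<length us. us!i \<in> S i"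
  proof (intro allI impI)
    fix i assume i: "i < length us"
    then have "(us@[u])!i \<in> S i" using snoc.prems(4) by simp
    then show "us!i \<in> S i" using i by (simp add: nth_append)
  qed
  moreover have "\<forall>i<length vs'. vs'!i \<in> S i"
  proof (intro allI impI)
    fix i assume i: "i < length vs'"
    then have "(vs'@[v])!i \<in> S i" using snoc.prems(5) vs by simp
    then show "vs'!i \<in> S i" using i by (simp add: nth_append)
  qed
  moreover have "us = vs'"
    apply (rule snoc.IH)
    using snoc.prems(1,2,3,7) vs calculation by simp_all
  ultimately show ?case using vs by simp
qed

lemma conc_Aplus: "X \<subseteq> Aplus A \<Longrightarrow> Y \<subseteq> Aplus A \<Longrightarrow> conc X Y \<subseteq> Aplus A"
  unfolding conc_def Aplus_def subset_iff by (auto simp: in_lists_conv_set)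

lemma nil_notin: "X \<subseteq> Aplus A \<Longrightarrow> [] \<notin> X"
  by (auto simp: Aplus_def)

lemma alt_nonempty: "alt_induced_code A Z \<Longrightarrow> Z \<noteq> {}"
  by (auto simp: alt_induced_code_def alternative_code_def conc_def)

lemma pref_alt:
  assumes "prefix_code A Z" "prefix_code A Z'" "Z \<noteq> {}" "Z' \<noteq> {}"
  shows "alternative_code A Z Z'"
  unfolding alternative_code_def
proof (intro conjI allI impI)
  show "Z \<subseteq> Aplus A" "Z' \<subseteq> Aplus A" using assms by (auto simp: prefix_code_def)
  show "Z \<noteq> {}" "Z' \<noteq> {}" by fact+
  fix b us vs assume h: "alt_fact Z Z' b us" "alt_fact Z Z' b vs" "concat us = concat vs"
  show "us = vs"
    apply (rule pre_uniq[of "\<lambda>i. if even i = b then Z else Z'"])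
    using assms h by (auto simp: alt_fact_def prefix_code_def Aplus_def)
qed

lemma suf_alt:
  assumes "suffix_code A Z" "suffix_code A Z'" "Z \<noteq> {}" "Z' \<noteq> {}"
  shows "alternative_code A Z Z'"
  unfolding alternative_code_def
proof (intro conjI allI impI)
  show "Z \<subseteq> Aplus A" "Z' \<subseteq> Aplus A" using assms by (auto simp: suffix_code_def)
  show "Z \<noteq> {}" "Z' \<noteq> {}" by fact+
  fix b us vs assume h: "alt_fact Z Z' b us" "alt_fact Z Z' b vs"
    "even (length us) = even (length vs)" "concat us = concat vs"
  show "us = vs"
    apply (rule suf_uniq[of "\<lambda>i. if even i = b then Z else Z'"])
    using assms h by (auto simp: alt_fact_def suffix_code_def Aplus_def)
qed

lemma conc_prefix:
  assumes "prefix_code A Z" "prefix_code A Z'"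
  shows "prefix_code A (conc Z Z')"
  unfolding prefix_code_def
proof (intro conjI ballI)
  show "conc Z Z' \<subseteq> Aplus A" using assms conc_Aplus by (auto simp: prefix_code_def)
  fix x y assume "x \<in> conc Z Z'" "y \<in> conc Z Z'"
  then obtain z1 z1' z2 z2' where z: "x = z1 @ z1'" "y = z2 @ z2'" "z1 \<in> Z" "z2 \<in> Z"
    "z1' \<in> Z'" "z2' \<in> Z'" by (auto simp: conc_def)
  show "\<not> strict_prefix x y"
  proof
    assume sp: "strict_prefix x y"
    then obtain t where t: "y = x @ t" "t \<noteq> []" by (auto simp: strict_prefix_def prefix_def)
    have "z1 @ (z1' @ t) = z2 @ z2'" using t z by simp
    then have "z1 = z2 \<and> z1' @ t = z2'"
      using pc_eq[of z1 "z1' @ t" z2 z2' Z] z assms(1) by (auto simp: prefix_code_def)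
    then have "strict_prefix z1' z2'" using t by (auto simp: strict_prefix_def)
    then show False using assms(2) z by (auto simp: prefix_code_def)
  qed
qed

lemma conc_suffix:
  assumes "suffix_code A Z" "suffix_code A Z'"
  shows "suffix_code A (conc Z Z')"
  unfolding suffix_code_def
proof (intro conjI ballI)
  show "conc Z Z' \<subseteq> Aplus A" using assms conc_Aplus by (auto simp: suffix_code_def)
  fix x y assume "x \<in> conc Z Z'" "y \<in> conc Z Z'"
  then obtain z1 z1' z2 z2' where z: "x = z1 @ z1'" "y = z2 @ z2'" "z1 \<in> Z" "z2 \<in> Z"
    "z1' \<in> Z'" "z2' \<in> Z'" by (auto simp: conc_def)
  show "\<not> strict_suffix x y"
  proof
    assume sp: "strict_suffix x y"
    then obtain t where t: "y = t @ x" "t \<noteq> []" by (auto simp: strict_suffix_def suffix_def)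
    have "(t @ z1) @ z1' = z2 @ z2'" using t z by simp
    then have "z1' = z2' \<and> t @ z1 = z2"
      using sc_eq[of "t @ z1" z1' z2 z2' Z'] z assms(2) by (auto simp: suffix_code_def)
    then have "strict_suffix z1 z2" using t by (auto simp: strict_suffix_def intro: suffixI)
    then show False using assms(1) z by (auto simp: suffix_code_def)
  qed
qed

theorem propositionP:
  fixes A :: "'a set" and Z Z' :: "'a list set"
  assumes "finite A" and "Z \<subseteq> Aplus A" and "Z' \<subseteq> Aplus A"
  shows "(prefix_alt_induced_code A Z \<and> prefix_alt_induced_code A Z'
            \<longrightarrow> prefix_alt_induced_code A (conc Z Z')) \<and>
         (suffix_alt_induced_code A Z \<and> suffix_alt_induced_code A Z'
            \<longrightarrow> suffix_alt_induced_code A (conc Z Z')) \<and>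
         (bifix_alt_induced_code A Z \<and> bifix_alt_induced_code A Z'
            \<longrightarrow> bifix_alt_induced_code A (conc Z Z'))"
proof (intro conjI impI)
  assume "prefix_alt_induced_code A Z \<and> prefix_alt_induced_code A Z'"
  then have h: "prefix_code A Z" "prefix_code A Z'" "Z \<noteq> {}" "Z' \<noteq> {}"
    using alt_nonempty by (auto simp: prefix_alt_induced_code_def)
  show "prefix_alt_induced_code A (conc Z Z')"
    unfolding prefix_alt_induced_code_def alt_induced_code_def
    using pref_alt[OF h] conc_prefix[OF h(1,2)] by blast
next
  assume "suffix_alt_induced_code A Z \<and> suffix_alt_induced_code A Z'"
  then have h: "suffix_code A Z" "suffix_code A Z'" "Z \<noteq> {}" "Z' \<noteq> {}"
    using alt_nonempty by (auto simp: suffix_alt_induced_code_def)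
  show "suffix_alt_induced_code A (conc Z Z')"
    unfolding suffix_alt_induced_code_def alt_induced_code_def
    using suf_alt[OF h] conc_suffix[OF h(1,2)] by blast
next
  assume "bifix_alt_induced_code A Z \<and> bifix_alt_induced_code A Z'"
  then have h: "prefix_code A Z" "prefix_code A Z'" "Z \<noteq> {}" "Z' \<noteq> {}"
    "suffix_code A Z" "suffix_code A Z'"
    using alt_nonempty by (auto simp: bifix_alt_induced_code_def bifix_code_def)
  show "bifix_alt_induced_code A (conc Z Z')"
    unfolding bifix_alt_induced_code_def alt_induced_code_def bifix_code_def
    using pref_alt[OF h(1-4)] conc_prefix[OF h(1,2)] conc_suffix[OF h(5,6)] by blast
qed

end
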